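(* Let $\mathcal{P}\subseteq[0,1]^n$ be a polytope. If $\mathcal{F}$ is a strong Bernoulli factory for $\mathcal{P}$ that converges exponentially on $\mathcal{P}$, then $\mathcal{F}$ is differentiable.
   Context: A Bernoulli factory with output set $V$ (for inputs $x\in[0,1]^n$) is a (possibly infinite) rooted binary tree whose internal nodes are labeled by an index $i\in[n]$ or a known constant $c\in(0,1)$ and whose leaves are labeled by elements of $V$; on input $x$ one walks from the root, at a node labeled $i$ flipping a fresh independent coin that is $1$ with probability $x_i$, at a node labeled $c$ a fresh coin of bias $c$, following the edge labeled by the outcome, and outputs the label of the leaf reached; $\mathcal{F}(x)$ is the output and $T_{\mathcal{F}}(x)$ the depth of the leaf reached ($\infty$ if none). For a polytope $\mathcal{P}$ with vertex set $V$, a strong Bernoulli factory for $\mathcal{P}$ is such a factory with output set $V$ that terminates almost surely and satisfies $\mathbb{E}[\mathcal{F}(x)]=x$ for all $x\in\mathcal{P}$. $\mathcal{F}$ converges exponentially on $S$ if there is $c<1$ with $\Pr[T_{\mathcal{F}}(x)>d]\le c^d$ for all positive integers $d$ and all $x\in S$. Define $P_v(x)=\Pr[\mathcal{F}(x)=v]$ and $P_{v,T}(x)=\Pr[\mathcal{F}(x)=v\wedge T_{\mathcal{F}}(x)\le T]$; the latter is the polynomial equal to the sum, over leaves labeled $v$ at depth at most $T$, of the product of the transition probabilities along the root-to-leaf path. Let $\mathcal{H}(\mathcal{P})$ be the affine span of $\mathcal{P}$ and $\mathcal{H}_0(\mathcal{P})=\{y-y':y,y'\in\mathcal{H}(\mathcal{P})\}$.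 $\mathcal{F}$ is differentiable if for each $v\in V$ and each $u\in\mathcal{H}_0(\mathcal{P})$ with $\|u\|=1$, at every $x\in\mathcal{P}$ the directional derivative $\partial_uP_v(x)$ exists and equals $\lim_{T\to\infty}\partial_uP_{v,T}(x)$. *)

theory Defs
  imports "HOL-Analysis.Analysis"
begin

text \<open>Node labels of a Bernoulli factory tree: a leaf carrying an output, an internal
node flipping coin i (of bias x i), or an internal node flipping a coin of known bias c.\<close>
datatype ('n, 'v) bf_label = Leaf 'v | Coin 'n | Const real

text \<open>A (possibly infinite) rooted binary tree is a labelling of all finite paths from the
root (bool lists, True = outcome 1). Only paths all of whose proper prefixes are internal
nodes belong to the tree.\<close>
type_synonym ('n, 'v) bf_tree = "bool list \<Rightarrow> ('n, 'v) bf_label"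

definition is_leaf :: "('n, 'v) bf_label \<Rightarrow> bool" where
  "is_leaf l \<longleftrightarrow> (\<exists>v. l = Leaf v)"

definition bf_node :: "('n, 'v) bf_tree \<Rightarrow> bool list \<Rightarrow> bool" where
  "bf_node t p \<longleftrightarrow> (\<forall>k<length p. \<not> is_leaf (t (take k p)))"

fun edge_prob :: "('n, 'v) bf_label \<Rightarrow> bool \<Rightarrow> real ^ 'n \<Rightarrow> real" where
  "edge_prob (Leaf v) b x = 0"
| "edge_prob (Coin i) b x = (if b then x $ i else 1 - x $ i)"
| "edge_prob (Const c) b x = (if b then c else 1 - c)"

definition path_prob :: "('n, 'v) bf_tree \<Rightarrow> real ^ 'n \<Rightarrow> bool list \<Rightarrow> real" where
  "path_prob t x p = (\<Prod>k<length p. edge_prob (t (take k p)) (p ! k) x)"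

definition bernoulli_factory :: "('n, 'v) bf_tree \<Rightarrow> 'v set \<Rightarrow> bool" where
  "bernoulli_factory t V \<longleftrightarrow>
     (\<forall>p. bf_node t p \<longrightarrow>
        (\<forall>v. t p = Leaf v \<longrightarrow> v \<in> V) \<and> (\<forall>c. t p = Const c \<longrightarrow> 0 < c \<and> c < 1))"

definition P_vT :: "('n, 'v) bf_tree \<Rightarrow> 'v \<Rightarrow> nat \<Rightarrow> real ^ 'n \<Rightarrow> real" where
  "P_vT t v T x = (\<Sum>p\<in>{p. length p \<le> T \<and> bf_node t p \<and> t p = Leaf v}. path_prob t x p)"

definition P_v :: "('n, 'v) bf_tree \<Rightarrow> 'v \<Rightarrow> real ^ 'n \<Rightarrow> real" where
  "P_v t v x = lim (\<lambda>T. P_vT t v T x)"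

definition stop_prob :: "('n, 'v) bf_tree \<Rightarrow> real ^ 'n \<Rightarrow> nat \<Rightarrow> real" where
  "stop_prob t x d = (\<Sum>p\<in>{p. length p \<le> d \<and> bf_node t p \<and> is_leaf (t p)}. path_prob t x p)"

definition vertices :: "(real ^ 'n) set \<Rightarrow> (real ^ 'n) set" where
  "vertices P = {v. v extreme_point_of P}"

definition strong_bernoulli_factory ::
    "('n, real ^ 'n) bf_tree \<Rightarrow> (real ^ 'n) set \<Rightarrow> bool" where
  "strong_bernoulli_factory t P \<longleftrightarrow>
     bernoulli_factory t (vertices P) \<and>
     (\<forall>x\<in>P. (\<lambda>d. stop_prob t x d) \<longlonglongrightarrow> 1) \<and>
     (\<forall>x\<in>P. (\<Sum>v\<in>vertices P. P_v t v x *\<^sub>R v) = x)"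

definition converges_exponentially :: "('n, 'v) bf_tree \<Rightarrow> (real ^ 'n) set \<Rightarrow> bool" where
  "converges_exponentially t S \<longleftrightarrow>
     (\<exists>c<1. \<forall>d>0. \<forall>x\<in>S. 1 - stop_prob t x d \<le> c ^ d)"

definition H0 :: "(real ^ 'n) set \<Rightarrow> (real ^ 'n) set" where
  "H0 P = {y - y' | y y'. y \<in> affine hull P \<and> y' \<in> affine hull P}"

text \<open>Directional derivative of P_v at x in direction u (taken along points of P, where P_v
is a probability) exists and equals lim_T of the directional derivative of the polynomial
P_{v,T}.\<close>
definition differentiable_factory :: "('n, real ^ 'n) bf_tree \<Rightarrow> (real ^ 'n) set \<Rightarrow> bool" where
  "differentiable_factory t P \<longleftrightarrow>
     (\<forall>v\<in>vertices P. \<forall>u\<in>H0 P. norm u = 1 \<longrightarrow> (\<forall>x\<in>P.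
        \<exists>L. (\<lambda>T. deriv (\<lambda>s. P_vT t v T (x + s *\<^sub>R u)) 0) \<longlonglongrightarrow> L \<and>
            ((\<lambda>s. (P_v t v (x + s *\<^sub>R u) - P_v t v x) / s) \<longlongrightarrow> L)
               (at 0 within {s. x + s *\<^sub>R u \<in> P})))"

end

theory Submission
  imports Defs
begin

definition elin :: "('n, 'v) bf_label \<Rightarrow> bool \<Rightarrow> real ^ 'n \<Rightarrow> real" where
  "elin l b w = (case l of Coin i \<Rightarrow> (if b then w $ i else - w $ i) | _ \<Rightarrow> 0)"

lemma edge_prob_affine: "edge_prob l b (y + s *\<^sub>R w) = edge_prob l b y + s * elin l b w"
  by (cases l) (auto simp: elin_def algebra_simps)

lemma elin_add: "elin l b (w1 + w2) = elin l b w1 + elin l b w2"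
  by (cases l) (auto simp: elin_def algebra_simps)

lemma elin_scale: "elin l b (c *\<^sub>R w) = c * elin l b w"
  by (cases l) (auto simp: elin_def algebra_simps)

definition dpp :: "('n,'v) bf_tree \<Rightarrow> bool list \<Rightarrow> real^'n \<Rightarrow> real^'n \<Rightarrow> real" where
 "dpp t p y w = (\<Sum>k<length p. elin (t (take k p)) (p!k) w *
     (\<Prod>j\<in>{..<length p}-{k}. edge_prob (t (take j p)) (p!j) y))"

definition Ad where "Ad t v T = {p. length p \<le> T \<and> bf_node t p \<and> t p = Leaf v}"
definition Bd where "Bd t v T = {p. length p = Suc T \<and> bf_node t p \<and> t p = Leaf v}"
definition DT where "DT t v T y w = (\<Sum>p\<in>Ad t v T. dpp t p y w)"

lemma dpp_add: "dpp t p y (w1 + w2) = dpp t p y w1 + dpp t p y w2"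
  by (simp add: dpp_def elin_add distrib_right sum.distrib)

lemma dpp_scale: "dpp t p y (c *\<^sub>R w) = c * dpp t p y w"
  by (simp add: dpp_def elin_scale sum_distrib_left mult.assoc)

lemma DT_add: "DT t v T y (w1 + w2) = DT t v T y w1 + DT t v T y w2"
  by (simp add: DT_def dpp_add sum.distrib)

lemma DT_scale: "DT t v T y (c *\<^sub>R w) = c * DT t v T y w"
  by (simp add: DT_def dpp_scale sum_distrib_left)

lemma finite_Ad: "finite (Ad t v T)"
  by (rule finite_subset[OF _ finite_lists_length_le[of UNIV T]]) (auto simp: Ad_def)

lemma finite_Bd: "finite (Bd t v T)"
  by (rule finite_subset[OF _ finite_lists_length_le[of UNIV "Suc T"]]) (auto simp: Bd_def)

lemma Ad_Suc: "Ad t v (Suc T) = Ad t v T \<union> Bd t v T" "Ad t v T \<inter> Bd t v T = {}"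
  by (auto simp: Ad_def Bd_def)

lemma path_prob_deriv:
  "((\<lambda>s. path_prob t (y + s *\<^sub>R w) p) has_real_derivative dpp t p (y + s0 *\<^sub>R w) w) (at s0)"
proof -
  have "((\<lambda>s. \<Prod>k<length p. edge_prob (t (take k p)) (p!k) y + s * elin (t (take k p)) (p!k) w)
     has_real_derivative (\<Sum>k<length p. elin (t (take k p)) (p!k) w *
       (\<Prod>j\<in>{..<length p}-{k}. edge_prob (t (take j p)) (p!j) y + s0 * elin (t (take j p)) (p!j) w))) (at s0)"
    by (rule has_field_derivative_prod) (auto intro!: derivative_eq_intros)
  then show ?thesis
    by (simp add: path_prob_def dpp_def edge_prob_affine)
qed

lemma PvT_eq: "P_vT t v T y = (\<Sum>p\<in>Ad t v T. path_prob t y p)"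
  by (simp add: P_vT_def Ad_def)

lemma PvT_deriv:
  "((\<lambda>s. P_vT t v T (y + s *\<^sub>R w)) has_real_derivative DT t v T (y + s0 *\<^sub>R w) w) (at s0)"
  unfolding PvT_eq DT_def
  by (rule DERIV_sum) (rule path_prob_deriv)

lemma PvT_Suc: "P_vT t v (Suc T) y - P_vT t v T y = (\<Sum>p\<in>Bd t v T. path_prob t y p)"
  unfolding PvT_eq Ad_Suc by (simp add: sum.union_disjoint finite_Ad finite_Bd Ad_Suc)

lemma DT_Suc: "DT t v (Suc T) y w - DT t v T y w = (\<Sum>p\<in>Bd t v T. dpp t p y w)"
  unfolding DT_def Ad_Suc by (simp add: sum.union_disjoint finite_Ad finite_Bd Ad_Suc)

lemma PvT_0: "P_vT t v 0 y = P_vT t v 0 z"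
  unfolding PvT_eq by (rule sum.cong) (auto simp: Ad_def path_prob_def)

lemma DT_0: "DT t v 0 y w = 0"
  unfolding DT_def by (rule sum.neutral) (auto simp: Ad_def dpp_def)

lemma prod_expand:
  fixes a b :: "nat \<Rightarrow> real"
  assumes "finite K" "\<And>k. k \<in> K \<Longrightarrow> a k \<ge> 0" "\<And>k. k \<in> K \<Longrightarrow> b k \<ge> 0" "t \<ge> 0"
  shows "(\<Prod>k\<in>K. a k) + t * (\<Sum>k\<in>K. b k * (\<Prod>j\<in>K-{k}. a j)) \<le> (\<Prod>k\<in>K. a k + b k * t)"
  using assms
proof (induction K rule: finite_induct)
  case empty
  then show ?case by simp
next
  case (insert i K)
  have eq: "(\<Sum>k\<in>insert i K. b k * (\<Prod>j\<in>insert i K-{k}. a j))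
      = b i * (\<Prod>j\<in>K. a j) + a i * (\<Sum>k\<in>K. b k * (\<Prod>j\<in>K-{k}. a j))"
  proof -
    have "(\<Sum>k\<in>K. b k * (\<Prod>j\<in>insert i K-{k}. a j)) = (\<Sum>k\<in>K. a i * (b k * (\<Prod>j\<in>K-{k}. a j)))"
    proof (rule sum.cong)
      fix k assume "k \<in> K"
      then have "insert i K - {k} = insert i (K - {k})" using insert.hyps by auto
      then show "b k * (\<Prod>j\<in>insert i K-{k}. a j) = a i * (b k * (\<Prod>j\<in>K-{k}. a j))"
        using insert.hyps by simp
    qed simp
    moreover have "insert i K - {i} = K" using insert.hyps by auto
    ultimately show ?thesis using insert.hyps by (simp add: sum_distrib_left)
  qed
  have IH: "(\<Prod>k\<in>K. a k) + t * (\<Sum>k\<in>K. b k * (\<Prod>j\<in>K-{k}. a j)) \<le> (\<Prod>k\<in>K. a k + b k * t)"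
    using insert by auto
  have ai: "a i \<ge> 0" "b i \<ge> 0" using insert by auto
  have S0: "(\<Sum>k\<in>K. b k * (\<Prod>j\<in>K-{k}. a j)) \<ge> 0"
    using insert.prems by (intro sum_nonneg mult_nonneg_nonneg prod_nonneg) auto
  have P0: "(\<Prod>k\<in>K. a k) \<ge> 0" using insert.prems by (intro prod_nonneg) auto
  have "(\<Prod>k\<in>insert i K. a k) + t * (\<Sum>k\<in>insert i K. b k * (\<Prod>j\<in>insert i K-{k}. a j))
      = a i * ((\<Prod>k\<in>K. a k) + t * (\<Sum>k\<in>K. b k * (\<Prod>j\<in>K-{k}. a j))) + b i * t * (\<Prod>k\<in>K. a k)"
    using insert.hyps by (simp add: eq algebra_simps)
  also have "\<dots> \<le> a i * (\<Prod>k\<in>K. a k + b k * t) + b i * t * (\<Prod>k\<in>K. a k + b k * t)"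
  proof (intro add_mono mult_left_mono IH)
    show "(\<Prod>k\<in>K. a k) \<le> (\<Prod>k\<in>K. a k + b k * t)"
      using insert.prems by (intro prod_mono) auto
  qed (use ai \<open>t\<ge>0\<close> in auto)
  also have "\<dots> = (\<Prod>k\<in>insert i K. a k + b k * t)"
    using insert.hyps by (simp add: algebra_simps)
  finally show ?case .
qed

lemma core_lower:
  fixes a b :: "nat \<Rightarrow> real"
  assumes "\<And>k. k < n \<Longrightarrow> a k \<ge> 0" "\<And>k. k < n \<Longrightarrow> a k + b k \<ge> 0"
  shows "- (real n * (\<Prod>k<n. a k)) \<le> (\<Sum>k<n. b k * (\<Prod>j\<in>{..<n}-{k}. a j))"
proof -
  have "(\<Sum>k<n. - (\<Prod>k<n. a k)) \<le> (\<Sum>k<n. b k * (\<Prod>j\<in>{..<n}-{k}. a j))"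
  proof (rule sum_mono)
    fix k assume k: "k \<in> {..<n}"
    have pr: "(\<Prod>k<n. a k) = a k * (\<Prod>j\<in>{..<n}-{k}. a j)"
      using k by (simp add: prod.remove)
    have nn: "(\<Prod>j\<in>{..<n}-{k}. a j) \<ge> 0" using assms(1) by (intro prod_nonneg) auto
    have "- a k \<le> b k" using assms(2) k by force
    then have "- a k * (\<Prod>j\<in>{..<n}-{k}. a j) \<le> b k * (\<Prod>j\<in>{..<n}-{k}. a j)"
      using nn by (rule mult_right_mono)
    then show "- (\<Prod>k<n. a k) \<le> b k * (\<Prod>j\<in>{..<n}-{k}. a j)" by (simp add: pr)
  qed
  then show ?thesis by simp
qed

lemma core_upper:
  fixes a b :: "nat \<Rightarrow> real"
  assumes n: "n > 0" and a: "\<And>k. k < n \<Longrightarrow> a k \<ge> 0" and ab: "\<And>k. k < n \<Longrightarrow> a k + b k \<ge> 0"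
  shows "(\<Sum>k<n. b k * (\<Prod>j\<in>{..<n}-{k}. a j)) \<le> 4 * real n * (\<Prod>k<n. a k + b k * (1 / (2 * real n)))"
proof -
  define t where "t = 1 / (2 * real n)"
  have t: "t > 0" "t \<le> 1/2" "real n * t = 1/2" using n by (auto simp: t_def field_simps)
  define bp where "bp k = max (b k) 0" for k
  have "(\<Sum>k<n. b k * (\<Prod>j\<in>{..<n}-{k}. a j)) \<le> (\<Sum>k<n. bp k * (\<Prod>j\<in>{..<n}-{k}. a j))"
    using a by (intro sum_mono mult_right_mono prod_nonneg) (auto simp: bp_def)
  also have "\<dots> \<le> ((\<Prod>k<n. a k + bp k * t)) / t"
  proof -
    have "(\<Prod>k<n. a k) + t * (\<Sum>k<n. bp k * (\<Prod>j\<in>{..<n}-{k}. a j)) \<le> (\<Prod>k<n. a k + bp k * t)"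
      using a t by (intro prod_expand) (auto simp: bp_def)
    moreover have "(\<Prod>k<n. a k) \<ge> 0" using a by (intro prod_nonneg) auto
    ultimately show ?thesis using t by (simp add: field_simps)
  qed
  also have "\<dots> \<le> (2 * (\<Prod>k<n. a k + b k * t)) / t"
  proof (rule divide_right_mono)
    have "(\<Prod>k<n. (1 - t) * (a k + bp k * t)) \<le> (\<Prod>k<n. a k + b k * t)"
    proof (rule prod_mono, safe)
      fix k assume k: "k < n"
      show "0 \<le> (1 - t) * (a k + bp k * t)" using a[OF k] t by (auto simp: bp_def)
      show "(1 - t) * (a k + bp k * t) \<le> a k + b k * t"
      proof (cases "b k \<ge> 0")
        case True
        then show ?thesis using a[OF k] t by (simp add: bp_def algebra_simps)
      next
        case False
        then have "bp k = 0" by (simp add: bp_def)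
        moreover have "- a k * t \<le> b k * t" using ab[OF k] t by (intro mult_right_mono) auto
        ultimately show ?thesis by (simp add: algebra_simps)
      qed
    qed
    moreover have "(\<Prod>k<n. (1 - t) * (a k + bp k * t)) = (1 - t) ^ n * (\<Prod>k<n. a k + bp k * t)"
      by (simp add: prod.distrib)
    moreover have "(1 - t) ^ n \<ge> 1/2"
    proof -
      have "1 + real n * (- t) \<le> (1 + - t) ^ n" using t by (intro Bernoulli_inequality) auto
      then show ?thesis using t by simp
    qed
    moreover have "(\<Prod>k<n. a k + bp k * t) \<ge> 0" using a t by (intro prod_nonneg) (auto simp: bp_def)
    ultimately show "(\<Prod>k<n. a k + bp k * t) \<le> 2 * (\<Prod>k<n. a k + b k * t)"
    proof -
      assume h: "(\<Prod>k<n. (1 - t) * (a k + bp k * t)) \<le> (\<Prod>k<n. a k + b k * t)"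
        "(\<Prod>k<n. (1 - t) * (a k + bp k * t)) = (1 - t) ^ n * (\<Prod>k<n. a k + bp k * t)"
        "(1 - t) ^ n \<ge> 1/2" "(\<Prod>k<n. a k + bp k * t) \<ge> 0"
      have "1/2 * (\<Prod>k<n. a k + bp k * t) \<le> (1 - t) ^ n * (\<Prod>k<n. a k + bp k * t)"
        using h(3,4) by (rule mult_right_mono)
      then show ?thesis using h(1,2) by linarith
    qed
  qed (use t in auto)
  also have "\<dots> = 4 * real n * (\<Prod>k<n. a k + b k * t)"
    using t n by (simp add: t_def field_simps)
  finally show ?thesis by (simp add: t_def)
qed

lemma convex_seg:
  fixes P :: "(real^'n) set"
  assumes "convex P" "y \<in> P" "y + w \<in> P" "0 \<le> \<tau>" "\<tau> \<le> 1"
  shows "y + \<tau> *\<^sub>R w \<in> P"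
proof -
  have "(1 - \<tau>) *\<^sub>R y + \<tau> *\<^sub>R (y + w) \<in> P"
    using assms by (intro convexD) auto
  also have "(1 - \<tau>) *\<^sub>R y + \<tau> *\<^sub>R (y + w) = y + \<tau> *\<^sub>R w"
    by (simp add: algebra_simps)
  finally show ?thesis .
qed

lemma edge_nonneg:
  assumes bf: "bernoulli_factory t V" and node: "bf_node t p" and k: "k < length p"
    and y: "\<forall>i. 0 \<le> y $ i \<and> y $ i \<le> 1"
  shows "edge_prob (t (take k p)) b y \<ge> 0"
proof (cases "t (take k p)")
  case (Const c)
  have "bf_node t (take k p)"
    using node k unfolding bf_node_def by (auto simp: min_def)
  then have "0 < c \<and> c < 1" using bf Const unfolding bernoulli_factory_def by blast
  then show ?thesis using Const by auto
qed (use y in auto)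

lemma path_prob_nonneg:
  assumes "bernoulli_factory t V" "bf_node t p" "\<forall>i. 0 \<le> y $ i \<and> y $ i \<le> 1"
  shows "path_prob t y p \<ge> 0"
  unfolding path_prob_def using edge_nonneg[OF assms(1,2) _ assms(3)]
  by (intro prod_nonneg) auto

lemma finite_stopset: "finite {p::bool list. length p \<le> d \<and> bf_node t p \<and> is_leaf (t p)}"
  by (rule finite_subset[OF _ finite_lists_length_le[of UNIV d]]) auto

lemma stop_Suc:
  "stop_prob t y (Suc d) = stop_prob t y d +
     (\<Sum>p\<in>{p. length p = Suc d \<and> bf_node t p \<and> is_leaf (t p)}. path_prob t y p)"
proof -
  have "{p::bool list. length p \<le> Suc d \<and> bf_node t p \<and> is_leaf (t p)} =
    {p. length p \<le> d \<and> bf_node t p \<and> is_leaf (t p)} \<union> {p. length p = Suc d \<and> bf_node t p \<and> is_leaf (t p)}"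
    (is "?A = ?B \<union> ?C") by auto
  moreover have "finite ?C"
    by (rule finite_subset[OF _ finite_lists_length_le[of UNIV "Suc d"]]) auto
  ultimately show ?thesis unfolding stop_prob_def
    by (simp only:) (rule sum.union_disjoint, auto simp: finite_stopset)
qed

lemma stop_nonneg:
  assumes "bernoulli_factory t V" "\<forall>i. 0 \<le> y $ i \<and> y $ i \<le> 1"
  shows "stop_prob t y d \<ge> 0"
  unfolding stop_prob_def using path_prob_nonneg[OF assms(1) _ assms(2)]
  by (intro sum_nonneg) auto

lemma Bsum_nonneg:
  assumes "bernoulli_factory t V" "\<forall>i. 0 \<le> y $ i \<and> y $ i \<le> 1"
  shows "(\<Sum>p\<in>Bd t v T. path_prob t y p) \<ge> 0"
  using path_prob_nonneg[OF assms(1) _ assms(2)]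
  by (intro sum_nonneg) (auto simp: Bd_def)

lemma stop_le1:
  assumes "bernoulli_factory t V" "\<forall>i. 0 \<le> y $ i \<and> y $ i \<le> 1"
    and lim: "(\<lambda>d. stop_prob t y d) \<longlonglongrightarrow> 1"
  shows "stop_prob t y d \<le> 1"
proof -
  have "incseq (\<lambda>d. stop_prob t y d)"
  proof (rule incseq_SucI)
    fix d
    have "(\<Sum>p\<in>{p. length p = Suc d \<and> bf_node t p \<and> is_leaf (t p)}. path_prob t y p) \<ge> 0"
      using path_prob_nonneg[OF assms(1) _ assms(2)] by (intro sum_nonneg) auto
    then show "stop_prob t y d \<le> stop_prob t y (Suc d)" by (simp add: stop_Suc)
  qed
  then show ?thesis using lim by (rule incseq_le)
qed

lemma Bsum_le:
  assumes bf: "bernoulli_factory t V" and y: "\<forall>i. 0 \<le> y $ i \<and> y $ i \<le> 1"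
    and lim: "(\<lambda>d. stop_prob t y d) \<longlonglongrightarrow> 1"
  shows "(\<Sum>p\<in>Bd t v T. path_prob t y p) \<le> 1 - stop_prob t y T"
proof -
  let ?C = "{p. length p = Suc T \<and> bf_node t p \<and> is_leaf (t p)}"
  have fin: "finite ?C"
    by (rule finite_subset[OF _ finite_lists_length_le[of UNIV "Suc T"]]) auto
  have "(\<Sum>p\<in>Bd t v T. path_prob t y p) \<le> (\<Sum>p\<in>?C. path_prob t y p)"
  proof (rule sum_mono2[OF fin])
    show "Bd t v T \<subseteq> ?C" by (auto simp: Bd_def is_leaf_def)
    show "\<And>b. b \<in> ?C - Bd t v T \<Longrightarrow> 0 \<le> path_prob t y b"
      using path_prob_nonneg[OF bf _ y] by blast
  qed
  also have "\<dots> = stop_prob t y (Suc T) - stop_prob t y T" by (simp add: stop_Suc)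
  also have "\<dots> \<le> 1 - stop_prob t y T" using stop_le1[OF bf y lim] by simp
  finally show ?thesis .
qed

lemma Bsum_le_c:
  assumes bf: "bernoulli_factory t V" and y: "\<forall>i. 0 \<le> y $ i \<and> y $ i \<le> 1"
    and lim: "(\<lambda>d. stop_prob t y d) \<longlonglongrightarrow> 1"
    and c: "\<forall>d>0. 1 - stop_prob t y d \<le> c ^ d"
  shows "(\<Sum>p\<in>Bd t v T. path_prob t y p) \<le> c ^ T"
proof (cases "T = 0")
  case True
  then show ?thesis using Bsum_le[OF bf y lim, of v T] stop_nonneg[OF bf y, of T] by simp
next
  case False
  then have "1 - stop_prob t y T \<le> c ^ T" using c by simp
  then show ?thesis using Bsum_le[OF bf y lim, of v T] by linarith
qed

lemma dB_bound:
  fixes P :: "(real^'n) set"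
  assumes bf: "bernoulli_factory t V" and cube: "P \<subseteq> {x. \<forall>i. 0 \<le> x $ i \<and> x $ i \<le> 1}"
    and cvx: "convex P"
    and lim: "\<forall>x\<in>P. (\<lambda>d. stop_prob t x d) \<longlonglongrightarrow> 1"
    and c: "\<forall>d>0. \<forall>x\<in>P. 1 - stop_prob t x d \<le> c ^ d"
    and y: "y \<in> P" and yw: "y + w \<in> P"
  shows "\<bar>\<Sum>p\<in>Bd t v T. dpp t p y w\<bar> \<le> 4 * real (Suc T) * c ^ T"
proof -
  define n where "n = Suc T"
  define z where "z = y + (1 / (2 * real n)) *\<^sub>R w"
  have z: "z \<in> P" unfolding z_def using cvx y yw by (intro convex_seg) (auto simp: n_def)
  have ycube: "\<forall>i. 0 \<le> y $ i \<and> y $ i \<le> 1" using y cube by auto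
  have zcube: "\<forall>i. 0 \<le> z $ i \<and> z $ i \<le> 1" using z cube by auto
  have ywcube: "\<forall>i. 0 \<le> (y + 1 *\<^sub>R w) $ i \<and> (y + 1 *\<^sub>R w) $ i \<le> 1" using yw cube by auto
  have per: "- (real n * path_prob t y p) \<le> dpp t p y w \<and> dpp t p y w \<le> 4 * real n * path_prob t z p"
    if p: "p \<in> Bd t v T" for p
  proof -
    have len: "length p = n" and node: "bf_node t p" using p by (auto simp: Bd_def n_def)
    define a where "a k = edge_prob (t (take k p)) (p!k) y" for k
    define b where "b k = elin (t (take k p)) (p!k) w" for k
    have a0: "a k \<ge> 0" if "k < n" for k
      unfolding a_def using edge_nonneg[OF bf node _ ycube] that len by auto
    have ab0: "a k + b k \<ge> 0" if "k < n" for k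
      using edge_nonneg[OF bf node _ ywcube, of k "p!k"] that len
        edge_prob_affine[of "t (take k p)" "p!k" y 1 w]
      by (simp add: a_def b_def del: scaleR_one)
    have d: "dpp t p y w = (\<Sum>k<n. b k * (\<Prod>j\<in>{..<n}-{k}. a j))"
      by (simp add: dpp_def len a_def b_def)
    have py: "path_prob t y p = (\<Prod>k<n. a k)" by (simp add: path_prob_def len a_def)
    have pz: "path_prob t z p = (\<Prod>k<n. a k + b k * (1 / (2 * real n)))"
      by (simp add: path_prob_def len a_def b_def z_def edge_prob_affine mult.commute)
    show ?thesis
      using core_lower[of n a b, OF a0 ab0] core_upper[of n a b, OF _ a0 ab0]
      by (simp add: d py pz n_def)
  qed
  have lo: "- (real n * (\<Sum>p\<in>Bd t v T. path_prob t y p)) \<le> (\<Sum>p\<in>Bd t v T. dpp t p y w)"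
  proof -
    have "(\<Sum>p\<in>Bd t v T. - (real n * path_prob t y p)) \<le> (\<Sum>p\<in>Bd t v T. dpp t p y w)"
      using per by (intro sum_mono) auto
    then show ?thesis by (simp add: sum_negf sum_distrib_left)
  qed
  have hi: "(\<Sum>p\<in>Bd t v T. dpp t p y w) \<le> 4 * real n * (\<Sum>p\<in>Bd t v T. path_prob t z p)"
  proof -
    have "(\<Sum>p\<in>Bd t v T. dpp t p y w) \<le> (\<Sum>p\<in>Bd t v T. 4 * real n * path_prob t z p)"
      using per by (intro sum_mono) auto
    then show ?thesis by (simp add: sum_distrib_left)
  qed
  have hy: "(\<Sum>p\<in>Bd t v T. path_prob t y p) \<le> c ^ T"
    using y lim c by (intro Bsum_le_c[OF bf ycube]) auto
  have hz: "(\<Sum>p\<in>Bd t v T. path_prob t z p) \<le> c ^ T"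
    using z lim c by (intro Bsum_le_c[OF bf zcube]) auto
  have hy0: "(\<Sum>p\<in>Bd t v T. path_prob t y p) \<ge> 0" by (rule Bsum_nonneg[OF bf ycube])
  have A: "real n * (\<Sum>p\<in>Bd t v T. path_prob t y p) \<le> real n * c ^ T"
    using hy by (intro mult_left_mono) auto
  have B: "4 * real n * (\<Sum>p\<in>Bd t v T. path_prob t z p) \<le> 4 * real n * c ^ T"
    using hz by (intro mult_left_mono) auto
  have C: "real n * c ^ T \<ge> 0" using hy0 hy by simp
  have "\<bar>\<Sum>p\<in>Bd t v T. dpp t p y w\<bar> \<le> 4 * real n * c ^ T"
    using A B C lo hi by linarith
  then show ?thesis by (simp add: n_def)
qed

lemma summable_M:
  assumes "0 \<le> c" "c < (1::real)"
  shows "summable (\<lambda>T. 4 * real (Suc T) * c ^ T)"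
proof -
  have "summable (\<lambda>n. of_nat (Suc n) * c ^ n)"
    using geometric_deriv_sums[of c] assms by (auto simp: sums_iff)
  then have "summable (\<lambda>n. 4 * (real (Suc n) * c ^ n))" by (rule summable_mult)
  then show ?thesis by (simp only: mult.assoc)
qed

lemma conv_of_diff:
  fixes f :: "nat \<Rightarrow> real"
  assumes "\<And>n. \<bar>f (Suc n) - f n\<bar> \<le> M n" "summable M"
  shows "convergent f"
proof -
  have "summable (\<lambda>n. f (Suc n) - f n)"
    by (rule summable_comparison_test'[OF assms(2)]) (use assms(1) in auto)
  then obtain s where "(\<lambda>n. f (Suc n) - f n) sums s" by (auto simp: summable_def)
  then have "(\<lambda>n. \<Sum>i<n. f (Suc i) - f i) \<longlonglongrightarrow> s" by (simp add: sums_def)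
  then have "(\<lambda>n. f n - f 0) \<longlonglongrightarrow> s" by (simp add: sum_lessThan_telescope)
  then have "(\<lambda>n. (f n - f 0) + f 0) \<longlonglongrightarrow> s + f 0" by (intro tendsto_add) auto
  then show ?thesis by (auto simp: convergent_def)
qed

lemma conv_cmult:
  fixes f :: "nat \<Rightarrow> real"
  assumes "convergent f" shows "convergent (\<lambda>n. c * f n)"
proof -
  obtain l where "f \<longlonglongrightarrow> l" using assms by (auto simp: convergent_def)
  then have "(\<lambda>n. c * f n) \<longlonglongrightarrow> c * l" by (intro tendsto_mult_left)
  then show ?thesis by (auto simp: convergent_def)
qed

theorem theorem7p10:
  fixes P :: "(real ^ 'n) set" and t :: "('n, real ^ 'n) bf_tree"
  assumes "polytope P"
    and "P \<subseteq> {x. \<forall>i. 0 \<le> x $ i \<and> x $ i \<le> 1}"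
    and "strong_bernoulli_factory t P"
    and "converges_exponentially t P"
  shows "differentiable_factory t P"
proof -
  have cvx: "convex P" using assms(1) by (rule polytope_imp_convex)
  have bf: "bernoulli_factory t (vertices P)" and lim: "\<forall>x\<in>P. (\<lambda>d. stop_prob t x d) \<longlonglongrightarrow> 1"
    using assms(3) by (auto simp: strong_bernoulli_factory_def)
  obtain c where c1: "c < 1" and c: "\<forall>d>0. \<forall>x\<in>P. 1 - stop_prob t x d \<le> c ^ d"
    using assms(4) by (auto simp: converges_exponentially_def)
  define M where "M T = 4 * real (Suc T) * c ^ T" for T
  have diff: "\<bar>DT t v (Suc T) y w - DT t v T y w\<bar> \<le> M T" if "y \<in> P" "y + w \<in> P" for v T y w
    unfolding M_def DT_Suc using dB_bound[OF bf assms(2) cvx lim c that] .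
  have cube: "\<forall>i. 0 \<le> y $ i \<and> y $ i \<le> 1" if "y \<in> P" for y
    using that assms(2) by auto
  show ?thesis
    unfolding differentiable_factory_def
  proof (intro ballI impI)
    fix v u x assume v: "v \<in> vertices P" and u: "u \<in> H0 P" and nu: "norm u = 1" and x: "x \<in> P"
    have c0: "0 \<le> c"
    proof -
      have "1 - stop_prob t x 1 \<le> c" using c x by (metis power_one_right zero_less_one)
      moreover have "stop_prob t x 1 \<le> 1" using stop_le1[OF bf cube[OF x]] x lim by auto
      ultimately show ?thesis by linarith
    qed
    have sM: "summable M" unfolding M_def using summable_M[OF c0 c1] .
    define W where "W = {w. convergent (\<lambda>T. DT t v T x w)}"
    have subW: "subspace W"
      unfolding subspace_def W_def
    proof (intro conjI ballI allI)
      have "(\<lambda>T. DT t v T x 0) = (\<lambda>T. 0)"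
        using DT_scale[of t v _ x 0 0] by simp
      then show "0 \<in> {w. convergent (\<lambda>T. DT t v T x w)}" by (simp add: convergent_const)
    next
      fix a b assume "a \<in> {w. convergent (\<lambda>T. DT t v T x w)}" "b \<in> {w. convergent (\<lambda>T. DT t v T x w)}"
      then show "a + b \<in> {w. convergent (\<lambda>T. DT t v T x w)}"
        by (simp add: DT_add convergent_add)
    next
      fix r :: real and a assume "a \<in> {w. convergent (\<lambda>T. DT t v T x w)}"
      then show "r *\<^sub>R a \<in> {w. convergent (\<lambda>T. DT t v T x w)}"
        by (simp add: DT_scale conv_cmult)
    qed
    define S where "S = (\<lambda>z. -x + z) ` (P - {x})"
    have SW: "S \<subseteq> W"
    proof
      fix w assume "w \<in> S"
      then obtain p where p: "p \<in> P" "w = -x + p" by (auto simp: S_def)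
      have "x + w \<in> P" using p by simp
      then show "w \<in> W" unfolding W_def
        using conv_of_diff[of "\<lambda>T. DT t v T x w" M, OF diff[OF x] sM] by simp
    qed
    have uS: "u \<in> span S"
    proof -
      obtain y y' where yy: "u = y - y'" "y \<in> affine hull P" "y' \<in> affine hull P"
        using u by (auto simp: H0_def)
      have ah: "affine hull P = (\<lambda>z. x + z) ` span S"
        unfolding S_def by (rule affine_hull_span2[OF x])
      obtain z1 z2 where "z1 \<in> span S" "z2 \<in> span S" "y = x + z1" "y' = x + z2"
        using yy(2,3) unfolding ah by auto
      then show ?thesis using yy(1) by (simp add: span_diff)
    qed
    have "u \<in> W" using span_minimal[OF SW subW] uS by auto
    then obtain L where L: "(\<lambda>T. DT t v T x u) \<longlonglongrightarrow> L" by (auto simp: W_def convergent_def)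
    have deq: "deriv (\<lambda>s. P_vT t v T (x + s *\<^sub>R u)) 0 = DT t v T x u" for T
      using DERIV_imp_deriv[OF PvT_deriv[of t v T x u 0]] by simp
    show "\<exists>L. (\<lambda>T. deriv (\<lambda>s. P_vT t v T (x + s *\<^sub>R u)) 0) \<longlonglongrightarrow> L \<and>
            ((\<lambda>s. (P_v t v (x + s *\<^sub>R u) - P_v t v x) / s) \<longlongrightarrow> L)
               (at 0 within {s. x + s *\<^sub>R u \<in> P})"
    proof (intro exI conjI)
      show "(\<lambda>T. deriv (\<lambda>s. P_vT t v T (x + s *\<^sub>R u)) 0) \<longlonglongrightarrow> L"
        using L by (simp add: deq)
    next
      define I where "I = {s. x + s *\<^sub>R u \<in> P}"
      have "((\<lambda>s. (P_v t v (x + s *\<^sub>R u) - P_v t v x) / s) \<longlongrightarrow> L) (at 0 within I)"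
      proof (cases "\<exists>s0. s0 \<noteq> 0 \<and> s0 \<in> I")
        case False
        then have "I \<subseteq> {0}" by auto
        then have "\<not> 0 islimpt I" using islimpt_subset islimpt_finite by blast
        then have "at 0 within I = bot" using trivial_limit_within by blast
        then show ?thesis by simp
      next
        case True
        then obtain s0 where s0: "s0 \<noteq> 0" "x + s0 *\<^sub>R u \<in> P" by (auto simp: I_def)
        have I0: "0 \<in> I" using x by (simp add: I_def)
        have cI: "convex I"
        proof (rule convexI)
          fix s1 s2 a b :: real
          assume h: "s1 \<in> I" "s2 \<in> I" "0 \<le> a" "0 \<le> b" "a + b = 1"
          have "a *\<^sub>R (x + s1 *\<^sub>R u) + b *\<^sub>R (x + s2 *\<^sub>R u) \<in> P"
            using h cvx by (intro convexD) (auto simp: I_def)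
          moreover have "a *\<^sub>R (x + s1 *\<^sub>R u) + b *\<^sub>R (x + s2 *\<^sub>R u) = (a + b) *\<^sub>R x + (a * s1 + b * s2) *\<^sub>R u"
            by (simp add: algebra_simps)
          ultimately show "a *\<^sub>R s1 + b *\<^sub>R s2 \<in> I" using h(5) by (simp add: I_def)
        qed
        have s0pos: "\<bar>s0\<bar> > 0" using s0 by simp
        have MT0: "M T \<ge> 0" for T using c0 by (simp add: M_def)
        have ub: "\<bar>DT t v (Suc T) (x + s *\<^sub>R u) u - DT t v T (x + s *\<^sub>R u) u\<bar> \<le> 2 * M T / \<bar>s0\<bar>"
          if sI: "s \<in> I" for s T
        proof -
          define y where "y = x + s *\<^sub>R u"
          define dd where "dd = DT t v (Suc T) y u - DT t v T y u"
          have y: "y \<in> P" using sI by (simp add: I_def y_def)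
          have sc: "DT t v (Suc T) y (r *\<^sub>R u) - DT t v T y (r *\<^sub>R u) = r * dd" for r
            by (simp add: DT_scale dd_def algebra_simps)
          have key: "\<bar>s0\<bar> / 2 * \<bar>dd\<bar> \<le> M T"
          proof (cases "\<bar>s0 - s\<bar> \<ge> \<bar>s0\<bar> / 2")
            case True
            have "y + (s0 - s) *\<^sub>R u = x + s0 *\<^sub>R u" by (simp add: y_def algebra_simps)
            then have "\<bar>(s0 - s) * dd\<bar> \<le> M T"
              using diff[of y "(s0 - s) *\<^sub>R u" v T] y s0(2) sc[of "s0 - s"] by simp
            then have "\<bar>s0 - s\<bar> * \<bar>dd\<bar> \<le> M T" by (simp add: abs_mult)
            moreover have "\<bar>s0\<bar> / 2 * \<bar>dd\<bar> \<le> \<bar>s0 - s\<bar> * \<bar>dd\<bar>"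
              using True by (intro mult_right_mono) auto
            ultimately show ?thesis by linarith
          next
            case False
            have "\<bar>s0\<bar> \<le> \<bar>s0 - s\<bar> + \<bar>s\<bar>" using abs_triangle_ineq[of "s0 - s" s] by simp
            then have ss: "\<bar>s\<bar> \<ge> \<bar>s0\<bar> / 2" using False by linarith
            have "y + (- s) *\<^sub>R u = x" by (simp add: y_def)
            then have "\<bar>(- s) * dd\<bar> \<le> M T"
              using diff[of y "(- s) *\<^sub>R u" v T] y x sc[of "- s"] by simp
            then have "\<bar>s\<bar> * \<bar>dd\<bar> \<le> M T" by (simp add: abs_mult)
            moreover have "\<bar>s0\<bar> / 2 * \<bar>dd\<bar> \<le> \<bar>s\<bar> * \<bar>dd\<bar>"
              using ss by (intro mult_right_mono) auto
            ultimately show ?thesis by linarith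
          qed
          then have "\<bar>dd\<bar> \<le> 2 * M T / \<bar>s0\<bar>" using s0pos by (simp add: field_simps)
          then show ?thesis by (simp add: dd_def y_def)
        qed
        define f where "f T s = P_vT t v (Suc T) (x + s *\<^sub>R u) - P_vT t v T (x + s *\<^sub>R u)" for T s
        define f' where "f' T s = DT t v (Suc T) (x + s *\<^sub>R u) u - DT t v T (x + s *\<^sub>R u) u" for T s
        have der: "(f T has_field_derivative f' T s) (at s within I)" for T s
        proof -
          have "(f T has_field_derivative f' T s) (at s)"
            unfolding f_def f'_def by (rule DERIV_diff[OF PvT_deriv PvT_deriv])
          then show ?thesis by (rule has_field_derivative_at_within)
        qed
        have sM2: "summable (\<lambda>T. 2 * M T / \<bar>s0\<bar>)"
          using sM by (intro summable_divide summable_mult)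
        have unif: "uniform_limit I (\<lambda>n s. \<Sum>i<n. f' i s) (\<lambda>s. suminf (\<lambda>i. f' i s)) sequentially"
          by (rule Weierstrass_m_test[OF _ sM2]) (use ub in \<open>auto simp: f'_def\<close>)
        have summ0: "summable (\<lambda>n. f n 0)"
        proof (rule summable_comparison_test'[of "\<lambda>n. c ^ n"])
          show "summable (\<lambda>n. c ^ n)" using c0 c1 by (intro summable_geometric) auto
        next
          fix n
          have "f n 0 = (\<Sum>p\<in>Bd t v n. path_prob t x p)" by (simp add: f_def PvT_Suc)
          moreover have "(\<Sum>p\<in>Bd t v n. path_prob t x p) \<ge> 0" by (rule Bsum_nonneg[OF bf cube[OF x]])
          moreover have "(\<Sum>p\<in>Bd t v n. path_prob t x p) \<le> c ^ n"
            using x lim c by (intro Bsum_le_c[OF bf cube[OF x]]) auto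
          ultimately show "norm (f n 0) \<le> c ^ n" by simp
        qed
        obtain g where g: "\<And>s. s \<in> I \<Longrightarrow> (\<lambda>n. f n s) sums g s \<and>
            (g has_field_derivative (suminf (\<lambda>i. f' i s))) (at s within I)"
          using has_field_derivative_series[OF cI der unif I0 summ0] by blast
        define K where "K = P_vT t v 0 x"
        have Pv: "P_v t v (x + s *\<^sub>R u) = g s + K" if "s \<in> I" for s
        proof -
          have "(\<lambda>n. \<Sum>i<n. f i s) \<longlonglongrightarrow> g s" using g that by (simp add: sums_def)
          moreover have "(\<Sum>i<n. f i s) = P_vT t v n (x + s *\<^sub>R u) - K" for n
            unfolding f_def K_def
            using sum_lessThan_telescope[of "\<lambda>T. P_vT t v T (x + s *\<^sub>R u)" n]
              PvT_0[of t v "x + s *\<^sub>R u" x] by simp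
          ultimately have "(\<lambda>n. P_vT t v n (x + s *\<^sub>R u) - K) \<longlonglongrightarrow> g s" by simp
          then have "(\<lambda>n. P_vT t v n (x + s *\<^sub>R u) - K + K) \<longlonglongrightarrow> g s + K"
            by (intro tendsto_add) auto
          then show ?thesis unfolding P_v_def by (intro limI) simp
        qed
        have gd: "(g has_field_derivative (suminf (\<lambda>i. f' i 0))) (at 0 within I)"
          using g I0 by blast
        have LL: "L = suminf (\<lambda>i. f' i 0)"
        proof -
          have "summable (\<lambda>i. f' i 0)"
            by (rule summable_comparison_test'[OF sM2]) (use ub[OF I0] in \<open>auto simp: f'_def\<close>)
          then have "(\<lambda>n. \<Sum>i<n. f' i 0) \<longlonglongrightarrow> suminf (\<lambda>i. f' i 0)" by (rule summable_LIMSEQ)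
          moreover have "(\<Sum>i<n. f' i 0) = DT t v n x u" for n
            unfolding f'_def
            using sum_lessThan_telescope[of "\<lambda>T. DT t v T x u" n] DT_0[of t v x u] by simp
          ultimately have "(\<lambda>n. DT t v n x u) \<longlonglongrightarrow> suminf (\<lambda>i. f' i 0)" by simp
          then show ?thesis using L LIMSEQ_unique by blast
        qed
        have "((\<lambda>s. (g s - g 0) / (s - 0)) \<longlongrightarrow> L) (at 0 within I)"
          using gd LL by (simp add: has_field_derivative_iff)
        moreover have EV: "\<forall>\<^sub>F s in at 0 within I. (g s - g 0) / (s - 0) = (P_v t v (x + s *\<^sub>R u) - P_v t v x) / s"
        proof -
          have "\<forall>s. s \<noteq> 0 \<longrightarrow> s \<in> I \<longrightarrow> (g s - g 0) / (s - 0) = (P_v t v (x + s *\<^sub>R u) - P_v t v x) / s"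
            using Pv Pv[OF I0] by simp
          then show ?thesis unfolding eventually_at_filter by (simp add: always_eventually)
        qed
        ultimately show ?thesis using tendsto_cong[OF EV] by blast
      qed
      then show "((\<lambda>s. (P_v t v (x + s *\<^sub>R u) - P_v t v x) / s) \<longlongrightarrow> L) (at 0 within {s. x + s *\<^sub>R u \<in> P})"
        by (simp add: I_def)
    qed
  qed
qed

end
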